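(* Let $f:\mathbb{X}(N,k)\to\mathbb{R}$ be a monotone $k$-submodular function, let $\hat{\mathbf{x}}\in\mathcal{X}$, and let $\hat{\mathbf{S}}=(\hat S_1,\dots,\hat S_k)$ be an optimal solution of the defender's problem defining $\Phi_D(\hat{\mathbf{x}})$, so $\Phi_D(\hat{\mathbf{x}})=f(\hat{\mathbf{S}})$. For each $q$ fix an arbitrary ordering $\hat S_q=\{i_{q,1},\dots,i_{q,T_q}\}$ and for $1\le t\le T_q$ let $\hat{\mathbf{S}}_{q,(t)}=(\hat S_1,\dots,\hat S_{q-1},\{i_{q,1},\dots,i_{q,t-1}\},\emptyset,\dots,\emptyset)$ (the $q$-th component is empty when $t=1$). Then for every $\mathbf{x}\in\mathcal{X}$, $$\Phi_D(\mathbf{x})\;\ge\;\Phi_D(\hat{\mathbf{x}})-\sum_{q=1}^k\sum_{t=1}^{T_q}\rho_{q,i_{q,t}}(\hat{\mathbf{S}}_{q,(t)})\,x_{q,i_{q,t}},$$ and moreover the right-hand side of this inequality is at least $\Phi_D(\hat{\mathbf{x}})-\sum_{q=1}^k\sum_{i\in\hat S_q}\rho_{q,i}(\boldsymbol{\emptyset})\,x_{q,i}$ for every $\mathbf{x}\in\mathcal{X}$.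
   Context: Let $n,k$ be positive integers and $N=\{1,\dots,n\}$. $\mathbb{X}(N,k)$ denotes the set of $k$-tuples $\mathbf{S}=(S_1,\dots,S_k)$ of pairwise disjoint subsets of $N$; such a tuple is identified with $\mathbf{s}\in\{0,1\}^{kn}$ where $s_{q,i}=1$ iff $i\in S_q$. For $\mathbf{X},\mathbf{Y}\in\mathbb{X}(N,k)$ let $\mathbf{X}\sqcap\mathbf{Y}=(X_1\cap Y_1,\dots,X_k\cap Y_k)$ and $\mathbf{X}\sqcup\mathbf{Y}$ be the tuple whose $i$-th component is $(X_i\cup Y_i)\setminus\bigcup_{q\ne i}(X_q\cup Y_q)$. A function $f:\mathbb{X}(N,k)\to\mathbb{R}$ is $k$-submodular if $f(\mathbf{X})+f(\mathbf{Y})\ge f(\mathbf{X}\sqcap\mathbf{Y})+f(\mathbf{X}\sqcup\mathbf{Y})$ for all $\mathbf{X},\mathbf{Y}$, and monotone if $f(\mathbf{X})\le f(\mathbf{Y})$ whenever $X_q\subseteq Y_q$ for all $q$. $\boldsymbol{\emptyset}=(\emptyset,\dots,\emptyset)$. For $\mathbf{X}\in\mathbb{X}(N,k)$, $q\in\{1,\dots,k\}$ and $i\in N\setminus\bigcup_r X_r$, the marginal gain is $\rho_{q,i}(\mathbf{X})=f(X_1,\dots,X_{q-1},X_q\cup\{i\},X_{q+1},\dots,X_k)-f(\mathbf{X})$. Given nonnegative integer budgets $A_1,\dots,A_k$ and $D_1,\dots,D_k$, the attacker's feasible set is $\mathcal{X}=\{\mathbf{x}\in\{0,1\}^{kn}:\sum_{i=1}^n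 x_{q,i}\le A_q\ \forall q,\ \sum_{q=1}^k x_{q,i}\le 1\ \forall i\in N\}$, and $\Phi_D(\mathbf{x})=\max\{f(\mathbf{S}):\mathbf{S}\in\mathbb{X}(N,k),\ s_{q,i}\le 1-x_{q,i}\ \forall q,i,\ \sum_{i=1}^n s_{q,i}\le D_q\ \forall q\}$. *)

theory Defs
  imports Complex_Main
begin

text \<open>A k-tuple of pairwise disjoint subsets of N = {1..n} is represented as a function
  S :: nat \<Rightarrow> nat set, component q being S q for q \<in> {1..k}, and S q = {} for q outside {1..k}.\<close>

definition kdisj :: "nat \<Rightarrow> nat \<Rightarrow> (nat \<Rightarrow> nat set) \<Rightarrow> bool" where
  "kdisj n k S \<longleftrightarrow> (\<forall>q. q \<notin> {1..k} \<longrightarrow> S q = {}) \<and> (\<forall>q. S q \<subseteq> {1..n})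
     \<and> (\<forall>q\<in>{1..k}. \<forall>r\<in>{1..k}. q \<noteq> r \<longrightarrow> S q \<inter> S r = {})"

definition kmeet :: "(nat \<Rightarrow> nat set) \<Rightarrow> (nat \<Rightarrow> nat set) \<Rightarrow> (nat \<Rightarrow> nat set)" where
  "kmeet X Y = (\<lambda>q. X q \<inter> Y q)"

definition kjoin :: "nat \<Rightarrow> (nat \<Rightarrow> nat set) \<Rightarrow> (nat \<Rightarrow> nat set) \<Rightarrow> (nat \<Rightarrow> nat set)" where
  "kjoin k X Y = (\<lambda>q. if q \<in> {1..k}
       then (X q \<union> Y q) - (\<Union>r\<in>{1..k} - {q}. X r \<union> Y r) else {})"

definition k_submodular :: "nat \<Rightarrow> nat \<Rightarrow> ((nat \<Rightarrow> nat set) \<Rightarrow> real) \<Rightarrow> bool" where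
  "k_submodular n k f \<longleftrightarrow> (\<forall>X Y. kdisj n k X \<longrightarrow> kdisj n k Y \<longrightarrow>
      f X + f Y \<ge> f (kmeet X Y) + f (kjoin k X Y))"

definition k_monotone :: "nat \<Rightarrow> nat \<Rightarrow> ((nat \<Rightarrow> nat set) \<Rightarrow> real) \<Rightarrow> bool" where
  "k_monotone n k f \<longleftrightarrow> (\<forall>X Y. kdisj n k X \<longrightarrow> kdisj n k Y \<longrightarrow>
      (\<forall>q\<in>{1..k}. X q \<subseteq> Y q) \<longrightarrow> f X \<le> f Y)"

definition rho :: "((nat \<Rightarrow> nat set) \<Rightarrow> real) \<Rightarrow> nat \<Rightarrow> nat \<Rightarrow> (nat \<Rightarrow> nat set) \<Rightarrow> real" where
  "rho f q i X = f (X(q := insert i (X q))) - f X"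

definition attacker_feasible :: "nat \<Rightarrow> nat \<Rightarrow> (nat \<Rightarrow> nat) \<Rightarrow> (nat \<Rightarrow> nat \<Rightarrow> nat) \<Rightarrow> bool" where
  "attacker_feasible n k A x \<longleftrightarrow>
     (\<forall>q\<in>{1..k}. \<forall>i\<in>{1..n}. x q i \<in> {0, 1}) \<and>
     (\<forall>q\<in>{1..k}. (\<Sum>i=1..n. x q i) \<le> A q) \<and>
     (\<forall>i\<in>{1..n}. (\<Sum>q=1..k. x q i) \<le> 1)"

text \<open>Defender feasibility: s_{q,i} \<le> 1 - x_{q,i} and |S_q| \<le> D_q.\<close>
definition defender_feasible ::
  "nat \<Rightarrow> nat \<Rightarrow> (nat \<Rightarrow> nat) \<Rightarrow> (nat \<Rightarrow> nat \<Rightarrow> nat) \<Rightarrow> (nat \<Rightarrow> nat set) \<Rightarrow> bool" where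
  "defender_feasible n k D x S \<longleftrightarrow> kdisj n k S \<and>
     (\<forall>q\<in>{1..k}. \<forall>i\<in>S q. x q i = 0) \<and>
     (\<forall>q\<in>{1..k}. card (S q) \<le> D q)"

definition Phi_D ::
  "nat \<Rightarrow> nat \<Rightarrow> (nat \<Rightarrow> nat) \<Rightarrow> ((nat \<Rightarrow> nat set) \<Rightarrow> real) \<Rightarrow> (nat \<Rightarrow> nat \<Rightarrow> nat) \<Rightarrow> real" where
  "Phi_D n k D f x = Max (f ` {S. defender_feasible n k D x S})"

text \<open>The partial tuple S_{q,(t)} for the ordering L q of component q (0-based t here:
  prefix of the first t elements of L q).\<close>
definition partial_tuple :: "(nat \<Rightarrow> nat set) \<Rightarrow> (nat \<Rightarrow> nat list) \<Rightarrow> nat \<Rightarrow> nat \<Rightarrow> (nat \<Rightarrow> nat set)" where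
  "partial_tuple S L q t = (\<lambda>r. if r < q then S r else if r = q then set (take t (L q)) else {})"

end

theory Submission
  imports Defs
begin

lemma kdisj_sub:
  assumes "kdisj n k S" "\<And>r. T r \<subseteq> S r"
  shows "kdisj n k T"
  using assms unfolding kdisj_def by blast

lemma finite_kdisj: "finite {S. kdisj n k S}"
proof -
  have "{S. kdisj n k S} \<subseteq> {S. \<forall>q. (q \<in> {1..k} \<longrightarrow> S q \<in> Pow {1..n}) \<and> (q \<notin> {1..k} \<longrightarrow> S q = {})}"
    unfolding kdisj_def by auto
  moreover have "finite {S. \<forall>q. (q \<in> {1..k} \<longrightarrow> S q \<in> Pow {1..n}) \<and> (q \<notin> {1..k} \<longrightarrow> S q = {})}"
    by (rule finite_set_of_finite_funs) auto
  ultimately show ?thesis by (rule finite_subset)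
qed

lemma DR:
  assumes sub: "k_submodular n k f"
    and A: "kdisj n k A" and B: "kdisj n k B" and AB: "\<And>r. A r \<subseteq> B r"
    and q: "q \<in> {1..k}" and i: "i \<in> {1..n}" and iB: "\<And>r. i \<notin> B r"
  shows "rho f q i B \<le> rho f q i A"
proof -
  define Y where "Y = A(q := insert i (A q))"
  have Yr: "Y r = (if r = q then insert i (A r) else A r)" for r by (simp add: Y_def)
  have iA: "i \<notin> A r" for r using AB iB by blast
  have A0: "A r = {}" if "r \<notin> {1..k}" for r using A that unfolding kdisj_def by blast
  have An: "A r \<subseteq> {1..n}" for r using A unfolding kdisj_def by blast
  have Ad: "A r \<inter> A r' = {}" if "r \<in> {1..k}" "r' \<in> {1..k}" "r \<noteq> r'" for r r'
    using A that unfolding kdisj_def by blast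
  have B0: "B r = {}" if "r \<notin> {1..k}" for r using B that unfolding kdisj_def by blast
  have Bd: "B r \<inter> B r' = {}" if "r \<in> {1..k}" "r' \<in> {1..k}" "r \<noteq> r'" for r r'
    using B that unfolding kdisj_def by blast
  have Y: "kdisj n k Y" unfolding kdisj_def
  proof (intro conjI allI impI ballI)
    fix r assume "r \<notin> {1..k}" thus "Y r = {}" using q A0 Yr by auto
  next
    fix r show "Y r \<subseteq> {1..n}" using An i Yr by auto
  next
    fix r r' assume rr: "r \<in> {1..k}" "r' \<in> {1..k}" "r \<noteq> r'"
    show "Y r \<inter> Y r' = {}" using Ad[OF rr] iA Yr[of r] Yr[of r'] rr(3) by auto
  qed
  have m: "kmeet B Y = A"
  proof
    fix r show "kmeet B Y r = A r" unfolding kmeet_def using AB[of r] iB[of r] Yr[of r] by auto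
  qed
  have j: "kjoin k B Y = B(q := insert i (B q))"
  proof
    fix r show "kjoin k B Y r = (B(q := insert i (B q))) r"
    proof (cases "r \<in> {1..k}")
      case False thus ?thesis using B0 q unfolding kjoin_def by auto
    next
      case r: True
      have "kjoin k B Y r = (B r \<union> Y r) - (\<Union>r'\<in>{1..k} - {r}. B r' \<union> Y r')"
        using r unfolding kjoin_def by simp
      also have "\<dots> = (B(q := insert i (B q))) r"
      proof (rule set_eqI)
        fix z
        show "z \<in> (B r \<union> Y r) - (\<Union>r'\<in>{1..k} - {r}. B r' \<union> Y r') \<longleftrightarrow> z \<in> (B(q := insert i (B q))) r"
        proof
          assume z: "z \<in> (B r \<union> Y r) - (\<Union>r'\<in>{1..k} - {r}. B r' \<union> Y r')"
          hence z1: "z \<in> B r \<union> Y r" by blast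
          have z2: "z \<notin> B r' \<union> Y r'" if "r' \<in> {1..k}" "r' \<noteq> r" for r' using z that by blast
          show "z \<in> (B(q := insert i (B q))) r"
          proof (cases "r = q")
            case True thus ?thesis using z1 Yr[of r] AB[of r] by auto
          next
            case False
            hence "z \<notin> Y q" using z2[of q] q by auto
            hence "z \<noteq> i" using Yr[of q] by auto
            thus ?thesis using z1 Yr[of r] AB[of r] False by auto
          qed
        next
          assume z: "z \<in> (B(q := insert i (B q))) r"
          have zin: "z \<in> B r \<union> Y r" using z Yr[of r] by (cases "r = q") auto
          have "z \<notin> B r' \<union> Y r'" if r': "r' \<in> {1..k}" "r' \<noteq> r" for r'
          proof -
            have "z \<in> B r \<or> (r = q \<and> z = i)" using z by (cases "r = q") auto
            moreover have "Y r' \<subseteq> B r' \<union> (if r' = q then {i} else {})" using Yr[of r'] AB[of r'] by auto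
            ultimately show ?thesis using Bd[OF r(1) r'(1)] r'(2) iB[of r'] iB[of r] by (auto split: if_splits)
          qed
          thus "z \<in> (B r \<union> Y r) - (\<Union>r'\<in>{1..k} - {r}. B r' \<union> Y r')" using zin by blast
        qed
      qed
      finally show ?thesis .
    qed
  qed
  have "f B + f Y \<ge> f (kmeet B Y) + f (kjoin k B Y)"
    using sub B Y unfolding k_submodular_def by blast
  hence "f B + f Y \<ge> f A + f (B(q := insert i (B q)))" unfolding m j .
  thus ?thesis unfolding rho_def Y_def by simp
qed
theorem theorem2:
  fixes n k :: nat and f :: "(nat \<Rightarrow> nat set) \<Rightarrow> real"
    and A D :: "nat \<Rightarrow> nat" and xhat :: "nat \<Rightarrow> nat \<Rightarrow> nat"
    and Shat :: "nat \<Rightarrow> nat set" and L :: "nat \<Rightarrow> nat list"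
  assumes "0 < n" and "0 < k"
    and "k_submodular n k f" and "k_monotone n k f"
    and "attacker_feasible n k A xhat"
    and "defender_feasible n k D xhat Shat"
    and "\<forall>S. defender_feasible n k D xhat S \<longrightarrow> f S \<le> f Shat"
    and "\<forall>q\<in>{1..k}. distinct (L q) \<and> set (L q) = Shat q"
  shows "\<forall>x. attacker_feasible n k A x \<longrightarrow>
      Phi_D n k D f x \<ge> Phi_D n k D f xhat -
        (\<Sum>q=1..k. \<Sum>t<length (L q).
           rho f q (L q ! t) (partial_tuple Shat L q t) * real (x q (L q ! t)))
    \<and> Phi_D n k D f xhat -
        (\<Sum>q=1..k. \<Sum>t<length (L q).
           rho f q (L q ! t) (partial_tuple Shat L q t) * real (x q (L q ! t)))
      \<ge> Phi_D n k D f xhat - (\<Sum>q=1..k. \<Sum>i\<in>Shat q. rho f q i (\<lambda>_. {}) * real (x q i))"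
proof (intro allI impI conjI)
  fix x assume xf: "attacker_feasible n k A x"
  note sub = assms(3) and mono = assms(4) and Sf = assms(6) and opt = assms(7) and Lq = assms(8)
  have Sk: "kdisj n k Shat" using Sf unfolding defender_feasible_def by simp
  have S0: "Shat r = {}" if "r \<notin> {1..k}" for r using Sk that unfolding kdisj_def by simp
  have Sn: "Shat r \<subseteq> {1..n}" for r using Sk unfolding kdisj_def by simp
  have Sd: "Shat r \<inter> Shat r' = {}" if "r \<in> {1..k}" "r' \<in> {1..k}" "r \<noteq> r'" for r r'
    using Sk that unfolding kdisj_def by simp
  have x01: "x q i = 0 \<or> x q i = 1" if "q \<in> {1..k}" "i \<in> {1..n}" for q i
    using xf that unfolding attacker_feasible_def by auto
  have finD: "finite {S. defender_feasible n k D y S}" for y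
    by (rule finite_subset[OF _ finite_kdisj[of n k]]) (auto simp: defender_feasible_def)
  have PhiS: "Phi_D n k D f xhat = f Shat"
    unfolding Phi_D_def using finD Sf opt by (intro Max_eqI) auto
  define S' where "S' = (\<lambda>r. {i \<in> Shat r. x r i = 0})"
  have S'f: "defender_feasible n k D x S'"
    unfolding defender_feasible_def
  proof (intro conjI ballI)
    show "kdisj n k S'" by (rule kdisj_sub[OF Sk]) (auto simp: S'_def)
  next
    fix q i assume "q \<in> {1..k}" "i \<in> S' q" thus "x q i = 0" by (simp add: S'_def)
  next
    fix q assume q: "q \<in> {1..k}"
    have "card (S' q) \<le> card (Shat q)"
      by (rule card_mono) (auto simp: S'_def intro: finite_subset[OF Sn])
    moreover have "card (Shat q) \<le> D q" using Sf q unfolding defender_feasible_def by blast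
    ultimately show "card (S' q) \<le> D q" by linarith
  qed
  have PhiX: "f S' \<le> Phi_D n k D f x"
    unfolding Phi_D_def using finD S'f by (intro Max_ge) auto
  define T where "T q t = (\<Sum>s<t. rho f q (L q ! s) (partial_tuple Shat L q s) * real (x q (L q ! s)))" for q t
  define Full where "Full q = (\<lambda>r. if r \<le> q then Shat r else {})" for q
  define Full' where "Full' q = (\<lambda>r. if r \<le> q then S' r else {})" for q
  define Pp where "Pp q t = partial_tuple Shat L q t" for q t
  define Pq where "Pq q t = (\<lambda>r. if r < q then S' r else if r = q then {i \<in> set (take t (L q)). x q i = 0} else {})" for q t
  have inner: "f (Pp q t) - f (Pq q t) \<le> f (Full (q-1)) - f (Full' (q-1)) + T q t"
    if q: "q \<in> {1..k}" and t: "t \<le> length (L q)" for q t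
    using t
  proof (induction t)
    case 0
    have "Pp q 0 = Full (q-1)" using q
      by (auto simp: fun_eq_iff Pp_def Full_def partial_tuple_def)
    moreover have "Pq q 0 = Full' (q-1)" using q
      by (auto simp: fun_eq_iff Pq_def Full'_def)
    ultimately show ?case by (simp add: T_def)
  next
    case (Suc t)
    hence tl: "t < length (L q)" by simp
    define i where "i = L q ! t"
    have dL: "distinct (L q)" and sL: "set (L q) = Shat q" using Lq q by auto
    have iS: "i \<in> Shat q" using nth_mem[OF tl] sL unfolding i_def by simp
    have iN: "i \<in> {1..n}" using iS Sn by blast
    have tk: "take (Suc t) (L q) = take t (L q) @ [i]" using tl i_def by (simp add: take_Suc_conv_app_nth)
    have inot: "i \<notin> set (take t (L q))"
    proof -
      have "i \<in> set (drop t (L q))" using tl unfolding i_def by (metis Cons_nth_drop_Suc list.set_intros(1))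
      thus ?thesis using set_take_disj_set_drop_if_distinct[OF dL, of t t] by blast
    qed
    have iP: "i \<notin> Pp q t r" for r
    proof -
      consider "r < q" | "r = q" | "r > q" by linarith
      thus ?thesis
      proof cases
        case 1 thus ?thesis
        proof (cases "r \<in> {1..k}")
          case True
            have "Pp q t r = Shat r" using 1 by (simp add: Pp_def partial_tuple_def)
            thus ?thesis using Sd[of r q] True q iS 1 by auto
        next
          case False
            have "Pp q t r = Shat r" using 1 by (simp add: Pp_def partial_tuple_def)
            thus ?thesis using S0[OF False] by simp
        qed
      qed (use inot in \<open>auto simp: Pp_def partial_tuple_def\<close>)
    qed
    have PS: "Pp q t r \<subseteq> Shat r" for r
      using sL by (auto simp: Pp_def partial_tuple_def dest: in_set_takeD)
    have QS: "Pq q t r \<subseteq> Shat r" for r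
      using sL by (auto simp: Pq_def S'_def dest: in_set_takeD)
    have QP: "Pq q t r \<subseteq> Pp q t r" for r
      by (auto simp: Pq_def Pp_def S'_def partial_tuple_def)
    have kP: "kdisj n k (Pp q t)" by (rule kdisj_sub[OF Sk PS])
    have kQ: "kdisj n k (Pq q t)" by (rule kdisj_sub[OF Sk QS])
    have PSuc: "Pp q (Suc t) = (Pp q t)(q := insert i (Pp q t q))"
      using tk by (auto simp: fun_eq_iff Pp_def partial_tuple_def)
    have Tsuc: "T q (Suc t) = T q t + rho f q i (Pp q t) * real (x q i)"
      by (simp add: T_def i_def Pp_def)
    have IH: "f (Pp q t) - f (Pq q t) \<le> f (Full (q-1)) - f (Full' (q-1)) + T q t"
      using Suc.IH tl by simp
    show ?case
    proof (cases "x q i = 0")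
      case True
      have QSuc: "Pq q (Suc t) = (Pq q t)(q := insert i (Pq q t q))"
        using tk True by (auto simp: fun_eq_iff Pq_def)
      have "rho f q i (Pp q t) \<le> rho f q i (Pq q t)"
        by (rule DR[OF sub kQ kP QP q iN iP])
      moreover have "T q (Suc t) = T q t" using Tsuc True by simp
      ultimately show ?thesis using IH unfolding PSuc QSuc rho_def by linarith
    next
      case False
      hence x1: "x q i = 1" using x01[OF q iN] by auto
      have QSuc: "Pq q (Suc t) = Pq q t"
        using tk False by (auto simp: fun_eq_iff Pq_def)
      have "T q (Suc t) = T q t + (f (Pp q (Suc t)) - f (Pp q t))" using Tsuc x1 PSuc by (simp add: rho_def)
      thus ?thesis using IH unfolding QSuc by linarith
    qed
  qed
  have outer: "f (Full q) - f (Full' q) \<le> (\<Sum>r=1..q. T r (length (L r)))" if "q \<le> k" for q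
    using that
  proof (induction q)
    case 0
    have "Full 0 = Full' 0" using S0[of 0] by (auto simp: fun_eq_iff Full_def Full'_def S'_def)
    thus ?case by simp
  next
    case (Suc q)
    have q: "Suc q \<in> {1..k}" using Suc.prems by simp
    have sL: "set (L (Suc q)) = Shat (Suc q)" using Lq q by auto
    have "Pp (Suc q) (length (L (Suc q))) = Full (Suc q)"
      using sL by (auto simp: fun_eq_iff Pp_def Full_def partial_tuple_def)
    moreover have "Pq (Suc q) (length (L (Suc q))) = Full' (Suc q)"
      using sL by (auto simp: fun_eq_iff Pq_def Full'_def S'_def)
    ultimately have "f (Full (Suc q)) - f (Full' (Suc q)) \<le> f (Full q) - f (Full' q) + T (Suc q) (length (L (Suc q)))"
      using inner[OF q, of "length (L (Suc q))"] by simp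
    thus ?case using Suc by simp
  qed
  have "Full k = Shat" using S0 by (auto simp: fun_eq_iff Full_def)
  moreover have "Full' k = S'" using S0 by (auto simp: fun_eq_iff Full'_def S'_def)
  ultimately have main: "f Shat - f S' \<le> (\<Sum>r=1..k. T r (length (L r)))"
    using outer[of k] by simp
  show "Phi_D n k D f x \<ge> Phi_D n k D f xhat -
        (\<Sum>q=1..k. \<Sum>t<length (L q).
           rho f q (L q ! t) (partial_tuple Shat L q t) * real (x q (L q ! t)))"
    using main PhiX PhiS unfolding T_def by simp
  have part2: "(\<Sum>t<length (L q). rho f q (L q ! t) (partial_tuple Shat L q t) * real (x q (L q ! t)))
      \<le> (\<Sum>i\<in>Shat q. rho f q i (\<lambda>_. {}) * real (x q i))" if q: "q \<in> {1..k}" for q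
  proof -
    have dL: "distinct (L q)" and sL: "set (L q) = Shat q" using Lq q by auto
    have "(\<Sum>t<length (L q). rho f q (L q ! t) (partial_tuple Shat L q t) * real (x q (L q ! t)))
       \<le> (\<Sum>t<length (L q). rho f q (L q ! t) (\<lambda>_. {}) * real (x q (L q ! t)))"
    proof (rule sum_mono)
      fix t assume "t \<in> {..<length (L q)}"
      hence tl: "t < length (L q)" by simp
      define i where "i = L q ! t"
      have iS: "i \<in> Shat q" using nth_mem[OF tl] sL unfolding i_def by simp
      have iN: "i \<in> {1..n}" using iS Sn by blast
      have inot: "i \<notin> set (take t (L q))"
      proof -
        have "i \<in> set (drop t (L q))" using tl unfolding i_def by (metis Cons_nth_drop_Suc list.set_intros(1))
        thus ?thesis using set_take_disj_set_drop_if_distinct[OF dL, of t t] by blast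
      qed
      have iP: "i \<notin> partial_tuple Shat L q t r" for r
      proof -
        consider "r < q" | "r = q" | "r > q" by linarith
        thus ?thesis
        proof cases
          case 1 thus ?thesis
          proof (cases "r \<in> {1..k}")
            case True
            have "partial_tuple Shat L q t r = Shat r" using 1 by (simp add: partial_tuple_def)
            thus ?thesis using Sd[of r q] True q iS 1 by auto
          next
            case False
            have "partial_tuple Shat L q t r = Shat r" using 1 by (simp add: partial_tuple_def)
            thus ?thesis using S0[OF False] by simp
          qed
        qed (use inot in \<open>auto simp: partial_tuple_def\<close>)
      qed
      have PS: "partial_tuple Shat L q t r \<subseteq> Shat r" for r
        using sL by (auto simp: partial_tuple_def dest: in_set_takeD)
      have "rho f q i (partial_tuple Shat L q t) \<le> rho f q i (\<lambda>_. {})"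
        by (rule DR[OF sub kdisj_sub[OF Sk] kdisj_sub[OF Sk PS] _ q iN iP]) auto
      thus "rho f q (L q ! t) (partial_tuple Shat L q t) * real (x q (L q ! t))
         \<le> rho f q (L q ! t) (\<lambda>_. {}) * real (x q (L q ! t))"
        unfolding i_def by (simp add: mult_right_mono)
    qed
    also have "\<dots> = (\<Sum>i\<in>Shat q. rho f q i (\<lambda>_. {}) * real (x q i))"
    proof -
      have im: "(!) (L q) ` {..<length (L q)} = Shat q" using sL by (metis atLeast_upt image_set map_nth set_map)
      show ?thesis
        using sum.reindex[OF inj_on_nth[OF dL, of "{..<length (L q)}"], of "\<lambda>i. rho f q i (\<lambda>_. {}) * real (x q i)"]
        unfolding im by (simp add: comp_def)
    qed
    finally show ?thesis .
  qed
  show "Phi_D n k D f xhat -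
        (\<Sum>q=1..k. \<Sum>t<length (L q).
           rho f q (L q ! t) (partial_tuple Shat L q t) * real (x q (L q ! t)))
      \<ge> Phi_D n k D f xhat - (\<Sum>q=1..k. \<Sum>i\<in>Shat q. rho f q i (\<lambda>_. {}) * real (x q i))"
    using sum_mono[of "{1..k}", OF part2] by simp
qed

end
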